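(* There exist constants $c_{\phi^\circ},C_{\phi^\circ}>0$, depending only on $\phi^\circ$, such that for every $x\in\Omega$ and all $p,p'\in\mathbb R^d$ with $|p|=1$ and $|p'|\le1$, $$\phi^\circ(x,p)-|p'|\tilde\psi(|p'|)\,\phi^\circ_p(x,p')\cdot p\ \ge\ c_{\phi^\circ}|p-p'|^2,$$ $$\phi^\circ(x,p)-|p'|\tilde\psi(|p'|)\,\phi^\circ_p(x,p')\cdot p\ \le\ C_{\phi^\circ}\big(|p-p'|^2+(1-|p'|)\big).$$
   Context: $\Omega=\mathbb T^d$. $A:\Omega\times\mathbb R^d\to\mathbb R$ belongs to $C^2(\Omega\times(\mathbb R^d\setminus\{0\}))\cap C^1(\Omega\times\mathbb R^d)$, is positive for $p\ne0$, $A(x,\lambda p)=\lambda^2A(x,p)$ for $\lambda>0$, $A_0|p|^2\le A(x,p)\le A_1|p|^2$ ($0<A_0\le A_1$), $|A_p(x,p)|\le a_1|p|$, and $A(x,\cdot)$ is strongly convex: $(A_p(x,p)-A_p(x,q))\cdot(p-q)\ge C_0|p-q|^2$ for all $x,p,q$. $\phi^\circ(x,p):=\sqrt{A(x,p)}$ and $\phi^\circ_p$ is its gradient in $p$. $\tilde\psi\in C^\infty([0,\infty))$ satisfies $\tilde\psi\equiv0$ on $[0,1/4]$, $\tilde\psi\equiv1$ on $[1/2,\infty)$, $\tilde\psi'\ge0$; the term $|p'|\tilde\psi(|p'|)\phi^\circ_p(x,p')$ is interpreted as $0$ when $|p'|\le1/4$. *)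

theory Defs
  imports "HOL-Analysis.Analysis"
begin

definition C1_on :: "'a::real_normed_vector set \<Rightarrow> ('a \<Rightarrow> 'b::real_normed_vector) \<Rightarrow> bool" where
  "C1_on S f \<longleftrightarrow> (\<exists>D. (\<forall>z\<in>S. (f has_derivative blinfun_apply (D z)) (at z)) \<and> continuous_on S D)"

definition C2_on :: "'a::real_normed_vector set \<Rightarrow> ('a \<Rightarrow> 'b::real_normed_vector) \<Rightarrow> bool" where
  "C2_on S f \<longleftrightarrow> (\<exists>D. (\<forall>z\<in>S. (f has_derivative blinfun_apply (D z)) (at z)) \<and> C1_on S D)"

definition grad :: "('a::real_inner \<Rightarrow> real) \<Rightarrow> 'a \<Rightarrow> 'a" where
  "grad f p = (SOME g. (f has_derivative (\<lambda>h. g \<bullet> h)) (at p))"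

text \<open>C-infinity on [0,infinity): a tower of successive derivatives (one-sided at 0).\<close>
definition smooth_nonneg :: "(real \<Rightarrow> real) \<Rightarrow> (nat \<Rightarrow> real \<Rightarrow> real) \<Rightarrow> bool" where
  "smooth_nonneg f D \<longleftrightarrow> D 0 = f \<and>
     (\<forall>n. \<forall>t\<ge>0. (D n has_real_derivative D (Suc n) t) (at t within {0..}))"

end

theory Submission
  imports Defs
begin

lemma grad_works:
  fixes f :: "'a::euclidean_space \<Rightarrow> real"
  assumes "(f has_derivative L) (at p)"
  shows "(f has_derivative (\<lambda>h. grad f p \<bullet> h)) (at p)" "L = (\<lambda>h. grad f p \<bullet> h)"
proof -
  have lin: "linear L" using assms has_derivative_linear by blast
  have eq: "L = (\<lambda>h. adjoint L 1 \<bullet> h)"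
  proof
    fix h show "L h = adjoint L 1 \<bullet> h"
      using adjoint_works[OF lin, of h 1] by (simp add: inner_commute)
  qed
  have ex: "\<exists>g. (f has_derivative (\<lambda>h. g \<bullet> h)) (at p)"
    using assms eq by metis
  show 1: "(f has_derivative (\<lambda>h. grad f p \<bullet> h)) (at p)"
    unfolding grad_def by (rule someI_ex[OF ex])
  show "L = (\<lambda>h. grad f p \<bullet> h)" using has_derivative_unique[OF assms 1] .
qed

lemma inner_fun_eq:
  fixes u v :: "'a::real_inner"
  assumes "(\<lambda>h. u \<bullet> h) = (\<lambda>h. v \<bullet> h)" shows "u = v"
proof -
  have "u \<bullet> (u - v) = v \<bullet> (u - v)" using fun_cong[OF assms, of "u - v"] .
  then have "(u - v) \<bullet> (u - v) = 0" by (simp add: inner_diff_left)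
  then show ?thesis by simp
qed

lemma grad_eq:
  fixes f :: "'a::euclidean_space \<Rightarrow> real"
  assumes "(f has_derivative (\<lambda>h. v \<bullet> h)) (at p)"
  shows "grad f p = v"
  using grad_works(2)[OF assms] inner_fun_eq by metis

lemma line_deriv:
  fixes f :: "'a::euclidean_space \<Rightarrow> real"
  assumes "\<And>p. (f has_derivative (\<lambda>h. G p \<bullet> h)) (at p)"
  shows "((\<lambda>t. f (q + t *\<^sub>R h)) has_real_derivative (G (q + t *\<^sub>R h) \<bullet> h)) (at t)"
proof -
  have d1: "((\<lambda>t. q + t *\<^sub>R h) has_derivative (\<lambda>s. s *\<^sub>R h)) (at t)"
    by (auto intro!: derivative_eq_intros)
  have "((\<lambda>t. f (q + t *\<^sub>R h)) has_derivative (\<lambda>s. G (q + t *\<^sub>R h) \<bullet> (s *\<^sub>R h))) (at t)"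
    using has_derivative_compose[OF d1 assms[of "q + t *\<^sub>R h"]] by simp
  moreover have "(\<lambda>s. s * (G (q + t *\<^sub>R h) \<bullet> h)) = (*) (G (q + t *\<^sub>R h) \<bullet> h)"
    by (auto simp: mult.commute)
  ultimately show ?thesis unfolding has_field_derivative_def by simp
qed



locale hfun =
  fixes f :: "'a::euclidean_space \<Rightarrow> real" and A0 A1 a1 C0 :: real
  assumes deriv: "\<And>p. (f has_derivative (\<lambda>h. grad f p \<bullet> h)) (at p)"
    and hom: "\<And>p t. t > 0 \<Longrightarrow> f (t *\<^sub>R p) = t\<^sup>2 * f p"
    and A0pos: "0 < A0"
    and bounds: "\<And>p. A0 * (norm p)\<^sup>2 \<le> f p \<and> f p \<le> A1 * (norm p)\<^sup>2"
    and grad_bd: "\<And>p. norm (grad f p) \<le> a1 * norm p"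
    and convex: "\<And>p q. (grad f p - grad f q) \<bullet> (p - q) \<ge> C0 * (norm (p - q))\<^sup>2"
    and C0pos: "C0 > 0"
begin

lemma euler: "grad f q \<bullet> q = 2 * f q"
proof -
  have d1: "((\<lambda>t. f (0 + t *\<^sub>R q)) has_real_derivative (grad f (0 + 1 *\<^sub>R q) \<bullet> q)) (at 1)"
    by (rule line_deriv[OF deriv])
  have d2: "((\<lambda>t. t\<^sup>2 * f q) has_real_derivative (2 * f q)) (at 1)"
    by (auto intro!: derivative_eq_intros)
  have d3: "((\<lambda>t. f (0 + t *\<^sub>R q)) has_real_derivative (2 * f q)) (at 1)"
    by (rule has_field_derivative_transform_within_open[OF d2, of "{0<..}"]) (auto simp: hom)
  show ?thesis using DERIV_unique[OF d1 d3] by simp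
qed

lemma ghom: assumes "t > 0" shows "grad f (t *\<^sub>R q) = t *\<^sub>R grad f q"
proof -
  have d1: "((\<lambda>v. t *\<^sub>R v) has_derivative (\<lambda>h. t *\<^sub>R h)) (at q)"
    by (auto intro!: derivative_eq_intros)
  have "((\<lambda>v. f (t *\<^sub>R v)) has_derivative (\<lambda>h. grad f (t *\<^sub>R q) \<bullet> (t *\<^sub>R h))) (at q)"
    using has_derivative_compose[OF d1 deriv] by simp
  moreover have "(\<lambda>v. f (t *\<^sub>R v)) = (\<lambda>v. t\<^sup>2 * f v)" using hom assms by auto
  ultimately have a: "((\<lambda>v. t\<^sup>2 * f v) has_derivative (\<lambda>h. (t *\<^sub>R grad f (t *\<^sub>R q)) \<bullet> h)) (at q)"
    by simp
  have b: "((\<lambda>v. t\<^sup>2 * f v) has_derivative (\<lambda>h. (t\<^sup>2 *\<^sub>R grad f q) \<bullet> h)) (at q)"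
    using has_derivative_mult_right[OF deriv, of "t\<^sup>2" q] by simp
  have "t *\<^sub>R grad f (t *\<^sub>R q) = t\<^sup>2 *\<^sub>R grad f q"
    using has_derivative_unique[OF a b] inner_fun_eq by metis
  then have "t *\<^sub>R grad f (t *\<^sub>R q) = t *\<^sub>R (t *\<^sub>R grad f q)" by (simp add: power2_eq_square)
  then show ?thesis using assms by (metis less_numeral_extra(3) scaleR_cancel_left)
qed

lemma breg_lower: "f p - f q - grad f q \<bullet> (p - q) \<ge> C0 / 2 * (norm (p - q))\<^sup>2"
proof -
  define h where "h = p - q"
  define k where "k = (\<lambda>t. f (q + t *\<^sub>R h) - t * (grad f q \<bullet> h) - C0 / 2 * t\<^sup>2 * (norm h)\<^sup>2)"
  have "k 0 \<le> k 1"
  proof (rule DERIV_nonneg_imp_nondecreasing[of 0 1 k])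
    fix t :: real assume t: "0 \<le> t" "t \<le> 1"
    have dk: "(k has_real_derivative (grad f (q + t *\<^sub>R h) \<bullet> h - grad f q \<bullet> h - C0 * t * (norm h)\<^sup>2)) (at t)"
    proof -
      have lf: "((\<lambda>t. f (q + t *\<^sub>R h)) has_real_derivative (grad f (q + t *\<^sub>R h) \<bullet> h)) (at t)"
        by (rule line_deriv[OF deriv])
      have d2: "((\<lambda>t. t * (grad f q \<bullet> h)) has_real_derivative grad f q \<bullet> h) (at t)"
        by (auto intro!: derivative_eq_intros)
      have d3: "((\<lambda>t. C0 / 2 * t\<^sup>2 * (norm h)\<^sup>2) has_real_derivative C0 * t * (norm h)\<^sup>2) (at t)"
        by (auto intro!: derivative_eq_intros)
      show ?thesis unfolding k_def using DERIV_diff[OF DERIV_diff[OF lf d2] d3] by simp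
    qed
    have "(grad f (q + t *\<^sub>R h) - grad f q) \<bullet> ((q + t *\<^sub>R h) - q) \<ge> C0 * (norm ((q + t *\<^sub>R h) - q))\<^sup>2"
      by (rule convex)
    then have "t * ((grad f (q + t *\<^sub>R h) - grad f q) \<bullet> h) \<ge> t * (C0 * t * (norm h)\<^sup>2)"
      using t by (simp add: power2_eq_square algebra_simps)
    then have "t * (grad f (q + t *\<^sub>R h) \<bullet> h - grad f q \<bullet> h - C0 * t * (norm h)\<^sup>2) \<ge> 0"
      by (simp add: algebra_simps inner_diff_left)
    then have "grad f (q + t *\<^sub>R h) \<bullet> h - grad f q \<bullet> h - C0 * t * (norm h)\<^sup>2 \<ge> 0 \<or> t = 0"
      using t by (auto simp add: zero_le_mult_iff)
    moreover have "t = 0 \<Longrightarrow> grad f (q + t *\<^sub>R h) \<bullet> h - grad f q \<bullet> h - C0 * t * (norm h)\<^sup>2 \<ge> 0" by simp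
    ultimately show "\<exists>y. (k has_real_derivative y) (at t) \<and> 0 \<le> y" using dk by blast
  qed simp
  then show ?thesis unfolding k_def h_def by (simp add: algebra_simps)
qed

lemma fpos: "q \<noteq> 0 \<Longrightarrow> f q > 0"
proof -
  assume "q \<noteq> 0"
  then have "A0 * (norm q)\<^sup>2 > 0" using A0pos by simp
  then show ?thesis using bounds[of q] by linarith
qed

lemma unit_bounds: "norm q = 1 \<Longrightarrow> A0 \<le> f q \<and> f q \<le> A1"
  using bounds[of q] by simp

lemma sqrt_grad: assumes "q \<noteq> 0"
  shows "grad (\<lambda>v. sqrt (f v)) q = (1 / (2 * sqrt (f q))) *\<^sub>R grad f q"
proof (rule grad_eq)
  have fq: "f q > 0" using fpos assms by blast
  have d: "((\<lambda>v. sqrt (f v)) has_derivative (\<lambda>h. (grad f q \<bullet> h) * (inverse (sqrt (f q)) / 2))) (at q)"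
    by (rule has_derivative_real_sqrt[OF fq deriv])
  have e: "(\<lambda>h. (grad f q \<bullet> h) * (inverse (sqrt (f q)) / 2)) = (\<lambda>h. ((1 / (2 * sqrt (f q))) *\<^sub>R grad f q) \<bullet> h)"
    by (rule ext) (simp add: field_simps)
  show "((\<lambda>v. sqrt (f v)) has_derivative (\<lambda>h. ((1 / (2 * sqrt (f q))) *\<^sub>R grad f q) \<bullet> h)) (at q)"
    using d unfolding e .
qed

lemma norm_scale_unit:
  fixes p q :: 'a and t :: real
  assumes "norm p = 1" "norm q = 1" "t \<ge> 0"
  shows "(norm (p - t *\<^sub>R q))\<^sup>2 \<ge> (norm (p - q))\<^sup>2 / 4"
proof -
  define c where "c = p \<bullet> q"
  have c1: "\<bar>c\<bar> \<le> 1" unfolding c_def using Cauchy_Schwarz_ineq2[of p q] assms by simp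
  have pp: "p \<bullet> p = 1" "q \<bullet> q = 1" using assms by (simp_all add: dot_square_norm)
  have e1: "(norm (p - t *\<^sub>R q))\<^sup>2 = 1 - 2 * t * c + t\<^sup>2"
    unfolding power2_norm_eq_inner c_def using pp
    by (simp add: inner_diff_left inner_diff_right inner_commute power2_eq_square algebra_simps)
  have e2: "(norm (p - q))\<^sup>2 = 2 - 2 * c"
    unfolding power2_norm_eq_inner c_def using pp
    by (simp add: inner_diff_left inner_diff_right inner_commute algebra_simps)
  have "1 - 2 * t * c + t\<^sup>2 \<ge> (2 - 2 * c) / 4"
  proof (cases "c \<le> 0")
    case True
    have "2 * t * c \<le> 0" using True assms(3) by (simp add: mult_nonneg_nonpos)
    moreover have "t\<^sup>2 \<ge> 0" by simp
    moreover have "(2 - 2 * c) / 4 \<le> 1" using c1 by simp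
    ultimately show ?thesis by linarith
  next
    case False
    have "(t - c)\<^sup>2 \<ge> 0" by simp
    then have h1: "2 * t * c \<le> c * c + t\<^sup>2" by (simp add: power2_eq_square algebra_simps)
    have "(1 - c) * (2 * c + 1) \<ge> 0" using c1 False by (intro mult_nonneg_nonneg) auto
    then have h2: "2 * (c * c) \<le> 1 + c" by (simp add: algebra_simps)
    have "2 - 2 * c \<le> 4 * (1 - 2 * t * c + t\<^sup>2)" using h1 h2 by (smt (verit))
    then show ?thesis by simp
  qed
  then show ?thesis using e1 e2 by simp
qed

lemma L_est:
  assumes p: "norm p = 1" and q: "norm q = 1"
  shows "C0 / (16 * sqrt A1) * (norm (p - q))\<^sup>2 \<le> sqrt (f p) - (grad f q \<bullet> p) / (2 * sqrt (f q))"
proof -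
  define a where "a = f p"
  define b where "b = f q"
  have a0: "A0 \<le> a" "a \<le> A1" using unit_bounds[OF p] a_def by auto
  have b0: "A0 \<le> b" "b \<le> A1" using unit_bounds[OF q] b_def by auto
  have apos: "a > 0" and bpos: "b > 0" using a0 b0 A0pos by auto
  define t where "t = sqrt a / sqrt b"
  have tpos: "t > 0" using apos bpos t_def by simp
  define q' where "q' = t *\<^sub>R q"
  have t2: "t\<^sup>2 * b = a" using apos bpos unfolding t_def by (simp add: power_divide)
  have fq': "f q' = a" unfolding q'_def using hom[OF tpos] t2 b_def by simp
  have gq': "grad f q' = t *\<^sub>R grad f q" unfolding q'_def by (rule ghom[OF tpos])
  have eu: "grad f q' \<bullet> q' = 2 * a" using euler[of q'] fq' by simp
  define N where "N = (norm (p - q'))\<^sup>2"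
  have bl: "f p - f q' - grad f q' \<bullet> (p - q') \<ge> C0 / 2 * N" unfolding N_def by (rule breg_lower)
  then have "2 * a - t * (grad f q \<bullet> p) \<ge> C0 / 2 * N"
    using fq' eu gq' a_def by (simp add: inner_diff_right)
  then have "sqrt a / sqrt b * (grad f q \<bullet> p) \<le> 2 * a - C0 / 2 * N" unfolding t_def by simp
  then have "(grad f q \<bullet> p) / sqrt b \<le> (2 * a - C0 / 2 * N) / sqrt a"
    using apos bpos by (simp add: field_simps)
  also have "\<dots> = 2 * sqrt a - C0 * N / (2 * sqrt a)"
    using apos by (simp add: field_simps)
  finally have m: "(grad f q \<bullet> p) / (2 * sqrt b) \<le> sqrt a - C0 * N / (4 * sqrt a)"
    by (simp add: field_simps)
  have Nb: "N \<ge> (norm (p - q))\<^sup>2 / 4" unfolding N_def q'_def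
    using norm_scale_unit[OF p q] tpos by simp
  define D where "D = (norm (p - q))\<^sup>2"
  have sa: "0 < sqrt a" "sqrt a \<le> sqrt A1" using apos a0 by auto
  have "C0 * (D / 4) / (4 * sqrt A1) \<le> C0 * (D / 4) / (4 * sqrt a)"
    using sa C0pos by (intro divide_left_mono) (auto simp: D_def)
  also have "\<dots> \<le> C0 * N / (4 * sqrt a)"
    using sa C0pos Nb unfolding D_def by (intro divide_right_mono) auto
  finally show ?thesis using m a_def b_def unfolding D_def by (simp add: field_simps)
qed


lemma U_est:
  assumes p: "norm p = 1" and q: "norm q = 1"
  shows "sqrt (f p) - (grad f q \<bullet> p) / (2 * sqrt (f q)) \<le> (f p - f q - grad f q \<bullet> (p - q)) / (2 * sqrt (f q))"
proof -
  define a where "a = f p"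
  define b where "b = f q"
  have apos: "a > 0" using unit_bounds[OF p] A0pos a_def by auto
  have bpos: "b > 0" using unit_bounds[OF q] A0pos b_def by auto
  have eu: "grad f q \<bullet> q = 2 * b" using euler b_def by simp
  have "(sqrt a - sqrt b)\<^sup>2 \<ge> 0" by simp
  then have "2 * sqrt a * sqrt b \<le> a + b" using apos bpos by (simp add: power2_eq_square algebra_simps)
  then have "sqrt a \<le> (a + b) / (2 * sqrt b)" using bpos by (simp add: field_simps)
  also have "(a + b) / (2 * sqrt b) = (a - b - grad f q \<bullet> (p - q)) / (2 * sqrt b) + (grad f q \<bullet> p) / (2 * sqrt b)"
    using eu bpos by (simp add: inner_diff_right field_simps)
  finally show ?thesis unfolding a_def b_def by simp
qed

end

locale hfun2 = hfun f A0 A1 a1 C0 for f :: "'a::euclidean_space \<Rightarrow> real" and A0 A1 a1 C0 +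
  fixes \<psi> :: "real \<Rightarrow> real" and M :: real
  assumes M0: "M \<ge> 0"
    and bu: "\<And>p q. norm p = 1 \<Longrightarrow> norm q = 1 \<Longrightarrow> norm (p - q) \<le> 1 \<Longrightarrow>
       f p - f q - grad f q \<bullet> (p - q) \<le> M * (norm (p - q))\<^sup>2"
    and psi1: "\<And>t. 1/2 \<le> t \<Longrightarrow> \<psi> t = 1"
    and psir: "\<And>t. 1/4 \<le> t \<Longrightarrow> 0 \<le> \<psi> t \<and> \<psi> t \<le> 1"
begin

lemma final_f:
  assumes p: "norm p = 1" and p': "norm p' \<le> 1"
  defines "Gb \<equiv> a1 / (2 * sqrt A0)"
  defines "K \<equiv> M / (2 * sqrt A0) + sqrt A1 + Gb"
  defines "c \<equiv> min (sqrt A0 / 4) (C0 / (128 * sqrt A1))"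
  defines "C \<equiv> 2 * K + 2 * sqrt A1 + 2 * Gb + 1"
  defines "T \<equiv> sqrt (f p) -
              (if norm p' \<le> 1/4 then 0
               else norm p' * \<psi> (norm p') * (grad (\<lambda>q. sqrt (f q)) p' \<bullet> p))"
  shows "c * (norm (p - p'))\<^sup>2 \<le> T \<and> T \<le> C * ((norm (p - p'))\<^sup>2 + (1 - norm p'))"
proof -
  define a where "a = f p"
  define r where "r = norm p'"
  have a0: "A0 \<le> a" "a \<le> A1" using unit_bounds[OF p] a_def by auto
  have A1pos: "A1 > 0" using a0 A0pos by simp
  have sa: "sqrt A0 \<le> sqrt a" "sqrt a \<le> sqrt A1" using a0 by auto
  have sA0: "sqrt A0 > 0" using A0pos by simp
  have a1nn: "a1 \<ge> 0" using grad_bd[of p] p by (metis mult.right_neutral norm_ge_zero order_trans)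
  have Gb0: "Gb \<ge> 0" unfolding Gb_def using a1nn sA0 by simp
  have K0: "K \<ge> sqrt A1 + Gb" unfolding K_def using M0 sA0 by simp
  have c0: "c \<le> sqrt A0 / 4" "c \<le> C0 / (128 * sqrt A1)" unfolding c_def by auto
  have cpos: "c > 0" unfolding c_def using sA0 C0pos A1pos by simp
  have C1: "C \<ge> 2 * K + 2 * sqrt A1 + 2 * Gb" unfolding C_def by simp
  have r1: "r \<le> 1" "0 \<le> r" using p' r_def by auto
  have sA1: "sqrt A1 > 0" using A1pos by simp
  have Cpos: "C > 0" using C1 K0 Gb0 sA1 by linarith
  have Kpos: "K > 0" using K0 Gb0 sA1 by linarith
  have nn: "(norm (p - p'))\<^sup>2 \<ge> 0" by simp
  show ?thesis
  proof (cases "r \<le> 1/4")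
    case True
    have T: "T = sqrt a" unfolding T_def a_def using True r_def by simp
    have "norm (p - p') \<le> 2" using norm_triangle_ineq4[of p p'] p p' by simp
    then have "(norm (p - p'))\<^sup>2 \<le> 4" by (metis norm_ge_zero power_mono numeral_times_numeral power2_eq_square num_double mult_2 numeral_Bit0 semiring_norm(3))
    then have "c * (norm (p - p'))\<^sup>2 \<le> sqrt A0 / 4 * 4"
      using cpos c0 A0pos by (intro mult_mono) auto
    then have lo: "c * (norm (p - p'))\<^sup>2 \<le> T" using T sa(1) by linarith
    have "T \<le> sqrt A1" using T sa(2) by linarith
    also have "\<dots> \<le> C * (3/4)" using C1 K0 Kpos Gb0 sA1 sa by linarith
    also have "\<dots> \<le> C * ((norm (p - p'))\<^sup>2 + (1 - r))"
    proof -
      have "3/4 \<le> (norm (p - p'))\<^sup>2 + (1 - r)" using True nn by linarith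
      then show ?thesis using Cpos by (intro mult_left_mono) auto
    qed
    finally show ?thesis using lo r_def by simp
  next
    case False
    then have rpos: "r > 0" and r4: "r > 1/4" by auto
    define q where "q = (1 / r) *\<^sub>R p'"
    have pq': "p' = r *\<^sub>R q" unfolding q_def using rpos by simp
    have q1: "norm q = 1" unfolding q_def r_def using rpos r_def by simp
    define b where "b = f q"
    have b0: "A0 \<le> b" using unit_bounds[OF q1] b_def by auto
    have bpos: "b > 0" using b0 A0pos by simp
    define G where "G = (grad f q \<bullet> p) / (2 * sqrt b)"
    have p'0: "p' \<noteq> 0" using rpos r_def by auto
    have "grad (\<lambda>q. sqrt (f q)) p' = (1 / (2 * sqrt (f p'))) *\<^sub>R grad f p'"
      by (rule sqrt_grad[OF p'0])
    also have "\<dots> = (1 / (2 * sqrt b)) *\<^sub>R grad f q"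
    proof -
      have "f p' = r\<^sup>2 * b" unfolding pq' b_def by (rule hom[OF rpos])
      then have "sqrt (f p') = r * sqrt b" using rpos by (simp add: real_sqrt_mult)
      moreover have "grad f p' = r *\<^sub>R grad f q" unfolding pq' by (rule ghom[OF rpos])
      ultimately show ?thesis using rpos by simp
    qed
    finally have gG: "grad (\<lambda>q. sqrt (f q)) p' \<bullet> p = G" unfolding G_def by simp
    have T: "T = sqrt a - r * \<psi> r * G" unfolding T_def a_def using False r_def gG by simp
    have Gabs: "\<bar>G\<bar> \<le> Gb"
    proof -
      have "\<bar>grad f q \<bullet> p\<bar> \<le> norm (grad f q) * norm p" by (rule Cauchy_Schwarz_ineq2)
      also have "\<dots> \<le> a1" using grad_bd[of q] q1 p by simp
      finally have "\<bar>grad f q \<bullet> p\<bar> \<le> a1" .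
      moreover have "sqrt A0 \<le> sqrt b" using b0 by simp
      ultimately show ?thesis unfolding G_def Gb_def using sA0
        by (simp add: abs_div frac_le)
    qed
    define D where "D = (norm (p - q))\<^sup>2"
    define D' where "D' = (norm (p - p'))\<^sup>2"
    have Lq: "C0 / (16 * sqrt A1) * D \<le> sqrt a - G"
      unfolding D_def a_def G_def b_def using L_est[OF p q1] .
    have D0: "D \<ge> 0" unfolding D_def by simp
    have Uq: "sqrt a - G \<le> K * D"
    proof (cases "norm (p - q) \<le> 1")
      case True
      have "sqrt a - G \<le> (f p - f q - grad f q \<bullet> (p - q)) / (2 * sqrt (f q))"
        unfolding a_def G_def b_def using U_est[OF p q1] .
      also have "\<dots> \<le> M * D / (2 * sqrt (f q))"
        using bu[OF p q1 True] bpos b_def unfolding D_def by (intro divide_right_mono) auto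
      also have "\<dots> \<le> M * D / (2 * sqrt A0)"
        using M0 D0 sA0 b0 b_def by (intro divide_left_mono mult_nonneg_nonneg) auto
      also have "\<dots> \<le> K * D" using D0 Gb0 sA1 unfolding K_def by (simp add: algebra_simps)
      finally show ?thesis .
    next
      case False
      then have "D \<ge> 1" unfolding D_def by (simp add: one_le_power)
      have "sqrt a - G \<le> sqrt A1 + Gb" using sa Gabs by linarith
      also have "\<dots> \<le> K * 1" using K0 by simp
      also have "\<dots> \<le> K * D" by (rule mult_left_mono) (use Kpos \<open>D \<ge> 1\<close> in auto)
      finally show ?thesis .
    qed
    have nd1: "norm (p - p') \<le> norm (p - q) + (1 - r)"
    proof -
      have "p - p' = (p - q) + (1 - r) *\<^sub>R q" unfolding pq' by (simp add: algebra_simps)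
      then have "norm (p - p') \<le> norm (p - q) + norm ((1 - r) *\<^sub>R q)" by (metis norm_triangle_ineq)
      then show ?thesis using q1 r1 by simp
    qed
    have nd2: "norm (p - q) \<le> norm (p - p') + (1 - r)"
    proof -
      have "p - q = (p - p') - (1 - r) *\<^sub>R q" unfolding pq' by (simp add: algebra_simps)
      then have "norm (p - q) \<le> norm (p - p') + norm ((1 - r) *\<^sub>R q)" by (metis norm_triangle_ineq4)
      then show ?thesis using q1 r1 by simp
    qed
    have sq: "\<And>x y z :: real. 0 \<le> x \<Longrightarrow> x \<le> y + z \<Longrightarrow> 0 \<le> y \<Longrightarrow> 0 \<le> z \<Longrightarrow> z \<le> 1 \<Longrightarrow> x\<^sup>2 \<le> 2 * y\<^sup>2 + 2 * z"
    proof -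
      fix x y z :: real assume h: "0 \<le> x" "x \<le> y + z" "0 \<le> y" "0 \<le> z" "z \<le> 1"
      have "x\<^sup>2 \<le> (y + z)\<^sup>2" using h by (intro power_mono) auto
      also have "\<dots> \<le> 2 * y\<^sup>2 + 2 * z\<^sup>2" by (smt (verit) zero_le_power2 power2_diff power2_sum)
      also have "z\<^sup>2 \<le> z" using h by (simp add: power2_eq_square mult_left_le)
      then have "2 * y\<^sup>2 + 2 * z\<^sup>2 \<le> 2 * y\<^sup>2 + 2 * z" by simp
      finally show "x\<^sup>2 \<le> 2 * y\<^sup>2 + 2 * z" .
    qed
    have D'D: "D' \<le> 2 * D + 2 * (1 - r)" unfolding D'_def D_def by (rule sq) (use nd1 r1 in auto)
    have DD': "D \<le> 2 * D' + 2 * (1 - r)" unfolding D'_def D_def by (rule sq) (use nd2 r1 in auto)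
    have psr: "0 \<le> \<psi> r" "\<psi> r \<le> 1" using psir r4 by auto
    have lo: "c * D' \<le> T"
    proof (cases "G \<le> 0")
      case True
      have "r * \<psi> r * G \<le> 0" using True psr rpos by (simp add: mult_nonneg_nonpos)
      then have "sqrt A0 \<le> T" using T sa(1) by linarith
      moreover have "norm (p - p') \<le> 2" using norm_triangle_ineq4[of p p'] p p' by simp
      then have "D' \<le> 4" unfolding D'_def by (metis norm_ge_zero power_mono numeral_times_numeral power2_eq_square num_double mult_2 numeral_Bit0 semiring_norm(3))
      then have "c * D' \<le> sqrt A0 / 4 * 4" using cpos c0 A0pos by (intro mult_mono) (auto simp: D'_def)
      ultimately show ?thesis by simp
    next
      case False
      have "r * \<psi> r * G \<le> r * G" using False psr rpos by (simp add: mult_left_le)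
      then have "T \<ge> sqrt a - r * G" using T by simp
      moreover have "sqrt a - r * G = (1 - r) * sqrt a + r * (sqrt a - G)" by (simp add: algebra_simps)
      moreover have "(1 - r) * sqrt a \<ge> (1 - r) * sqrt A0" using r1 sa by (intro mult_left_mono) auto
      moreover have "r * (sqrt a - G) \<ge> (1/4) * (C0 / (16 * sqrt A1) * D)"
        using Lq r4 C0pos A1pos D0 by (intro mult_mono) auto
      moreover have "c * D' \<le> c * (2 * D + 2 * (1 - r))" using D'D cpos by simp
      moreover have "c * (2 * D) \<le> (1/4) * (C0 / (16 * sqrt A1) * D)"
      proof -
        have "2 * c \<le> (1/4) * (C0 / (16 * sqrt A1))" using c0(2) A1pos by (simp add: field_simps)
        then show ?thesis using D0 by (metis mult.assoc mult.commute mult_right_mono)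
      qed
      moreover have "c * (2 * (1 - r)) \<le> (1 - r) * sqrt A0"
      proof -
        have "2 * c \<le> sqrt A0" using c0(1) cpos by linarith
        then show ?thesis using r1 by (metis mult.assoc mult.commute mult_right_mono diff_ge_0_iff_ge)
      qed
      ultimately show ?thesis by (simp add: algebra_simps)
    qed
    have up: "T \<le> C * (D' + (1 - r))"
    proof (cases "r < 1/2")
      case True
      have "\<bar>r * \<psi> r * G\<bar> \<le> 1 * 1 * Gb" unfolding abs_mult using psr r1 Gabs
        by (intro mult_mono) auto
      then have "T \<le> sqrt A1 + Gb" using T sa by linarith
      also have "\<dots> \<le> C * (1/2)" using C1 K0 Kpos Gb0 sA1 sa by linarith
      also have "\<dots> \<le> C * (D' + (1 - r))"
      proof -
        have "1/2 \<le> D' + (1 - r)" using True nn unfolding D'_def by linarith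
        then show ?thesis using Cpos by (intro mult_left_mono) auto
      qed
      finally show ?thesis .
    next
      case False
      then have "\<psi> r = 1" using psi1 by simp
      then have "T = (sqrt a - G) + (1 - r) * G" using T by (simp add: algebra_simps)
      also have "\<dots> \<le> K * D + (1 - r) * Gb" using Uq Gabs r1
        by (intro add_mono mult_left_mono) auto
      also have "\<dots> \<le> K * (2 * D' + 2 * (1 - r)) + (1 - r) * Gb"
        using mult_left_mono[OF DD', of K] Kpos by simp
      also have "\<dots> = 2 * K * D' + (2 * K + Gb) * (1 - r)" by (simp add: algebra_simps)
      also have "\<dots> \<le> C * D' + C * (1 - r)"
      proof -
        have k1: "2 * K \<le> C" "2 * K + Gb \<le> C" using C1 Gb0 sA1 by linarith+
        have "2 * K * D' \<le> C * D'" using mult_right_mono[OF k1(1), of D'] unfolding D'_def by simp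
        moreover have "(2 * K + Gb) * (1 - r) \<le> C * (1 - r)" using mult_right_mono[OF k1(2), of "1 - r"] r1 by simp
        ultimately show ?thesis by linarith
      qed
      finally show ?thesis by (simp add: algebra_simps)
    qed
    show ?thesis using lo up unfolding D'_def r_def by simp
  qed
qed

end

lemma psi_range:
  fixes \<psi> :: "real \<Rightarrow> real"
  assumes psi_smooth: "\<exists>D. smooth_nonneg \<psi> D \<and> (\<forall>t\<ge>0. D 1 t \<ge> 0)"
    and psi0: "\<And>t. 0 \<le> t \<Longrightarrow> t \<le> 1/4 \<Longrightarrow> \<psi> t = 0"
    and psi1: "\<And>t. 1/2 \<le> t \<Longrightarrow> \<psi> t = 1"
    and t: "1/4 \<le> t"
  shows "0 \<le> \<psi> t \<and> \<psi> t \<le> 1"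
proof -
  obtain D where D: "smooth_nonneg \<psi> D" and Dn: "\<forall>t\<ge>0. D 1 t \<ge> 0" using psi_smooth by blast
  have D0: "D 0 = \<psi>" and Dd: "\<And>t. t \<ge> 0 \<Longrightarrow> (D 0 has_real_derivative D (Suc 0) t) (at t within {0..})"
    using D unfolding smooth_nonneg_def by auto
  have mono: "\<psi> u \<le> \<psi> v" if "1/4 \<le> u" "u \<le> v" for u v
  proof (rule DERIV_nonneg_imp_nondecreasing[OF that(2)])
    fix y assume y: "u \<le> y" "y \<le> v"
    then have ypos: "y > 0" using that by simp
    have "(\<psi> has_real_derivative D (Suc 0) y) (at y within {0..})" using Dd[of y] ypos D0 by simp
    moreover have "at y within {0..} = at y" using ypos by (intro at_within_interior) simp
    ultimately have "(\<psi> has_real_derivative D (Suc 0) y) (at y)" by simp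
    moreover have "D (Suc 0) y \<ge> 0" using Dn ypos by simp
    ultimately show "\<exists>z. (\<psi> has_real_derivative z) (at y) \<and> 0 \<le> z" by blast
  qed
  show ?thesis
  proof (cases "t \<le> 1/2")
    case True
    have "\<psi> (1/4) \<le> \<psi> t" using mono[of "1/4" t] t by simp
    moreover have "\<psi> t \<le> \<psi> (1/2)" using mono[of t "1/2"] t True by simp
    ultimately show ?thesis using psi0[of "1/4"] psi1[of "1/2"] by simp
  next
    case False then show ?thesis using psi1[of t] by simp
  qed
qed

lemma seg_norm:
  fixes p q :: "'a::real_inner"
  assumes p: "norm p = 1" and q: "norm q = 1" and pq: "norm (p - q) \<le> 1" and u: "0 \<le> u" "u \<le> 1"
  shows "1/2 \<le> norm ((1 - u) *\<^sub>R q + u *\<^sub>R p) \<and> norm ((1 - u) *\<^sub>R q + u *\<^sub>R p) \<le> 1"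
proof
  have "norm ((1 - u) *\<^sub>R q + u *\<^sub>R p) \<le> norm ((1 - u) *\<^sub>R q) + norm (u *\<^sub>R p)" by (rule norm_triangle_ineq)
  also have "\<dots> = 1" using p q u by simp
  finally show "norm ((1 - u) *\<^sub>R q + u *\<^sub>R p) \<le> 1" .
next
  define c where "c = p \<bullet> q"
  have pp: "p \<bullet> p = 1" "q \<bullet> q = 1" using p q by (simp_all add: dot_square_norm)
  have e2: "(norm (p - q))\<^sup>2 = 2 - 2 * c"
    unfolding power2_norm_eq_inner c_def using pp
    by (simp add: inner_diff_left inner_diff_right inner_commute algebra_simps)
  have "(norm (p - q))\<^sup>2 \<le> 1" using pq by (simp add: power_le_one)
  then have c2: "c \<ge> 1/2" using e2 by simp
  have e1: "(norm ((1 - u) *\<^sub>R q + u *\<^sub>R p))\<^sup>2 = (1 - u)\<^sup>2 + u\<^sup>2 + 2 * u * (1 - u) * c"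
    unfolding power2_norm_eq_inner c_def using pp
    by (simp add: inner_add_left inner_add_right inner_commute power2_eq_square algebra_simps)
  have "u * (1 - u) * 1 \<le> u * (1 - u) * (2 * c)" using u c2 by (intro mult_left_mono) auto
  then have A: "u * (1 - u) \<le> 2 * (u * (1 - u) * c)" by (simp add: algebra_simps)
  have W: "(u - 1/2)\<^sup>2 \<ge> 0" by simp
  have E: "(1 - u)\<^sup>2 + u\<^sup>2 + 2 * u * (1 - u) * c = ((u - 1/2)\<^sup>2 + 3/4) + (2 * (u * (1 - u) * c) - u * (1 - u))"
    by (simp add: power2_eq_square field_simps)
  have "(1 - u)\<^sup>2 + u\<^sup>2 + 2 * u * (1 - u) * c \<ge> 1/4" using A W E by linarith
  then have "(1 - u)\<^sup>2 + u\<^sup>2 + 2 * u * (1 - u) * c \<ge> (1/2)\<^sup>2" by (simp add: power2_eq_square)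
  then have "(1/2)\<^sup>2 \<le> (norm ((1 - u) *\<^sub>R q + u *\<^sub>R p))\<^sup>2" using e1 by simp
  then show "1/2 \<le> norm ((1 - u) *\<^sub>R q + u *\<^sub>R p)" by (rule power2_le_imp_le) simp
qed

theorem mainTheorem14:
  fixes A :: "real^'d \<Rightarrow> real^'d \<Rightarrow> real"
    and \<psi> :: "real \<Rightarrow> real"
    and A0 A1 a1 C0 :: real
  assumes periodic: "\<And>x p (k::'d \<Rightarrow> int). A (x + (\<chi> i. of_int (k i))) p = A x p"
    and C1: "C1_on UNIV (\<lambda>z::(real^'d) \<times> (real^'d). A (fst z) (snd z))"
    and C2: "C2_on (UNIV \<times> (UNIV - {0})) (\<lambda>z::(real^'d) \<times> (real^'d). A (fst z) (snd z))"
    and pos: "\<And>x p. p \<noteq> 0 \<Longrightarrow> A x p > 0"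
    and hom: "\<And>x p (t::real). t > 0 \<Longrightarrow> A x (t *\<^sub>R p) = t\<^sup>2 * A x p"
    and A0pos: "0 < A0" and A01: "A0 \<le> A1"
    and bounds: "\<And>x p. A0 * (norm p)\<^sup>2 \<le> A x p \<and> A x p \<le> A1 * (norm p)\<^sup>2"
    and grad_bd: "\<And>x p. norm (grad (A x) p) \<le> a1 * norm p"
    and convex: "\<And>x p q. (grad (A x) p - grad (A x) q) \<bullet> (p - q) \<ge> C0 * (norm (p - q))\<^sup>2"
    and C0pos: "C0 > 0"
    and psi_smooth: "\<exists>D. smooth_nonneg \<psi> D \<and> (\<forall>t\<ge>0. D 1 t \<ge> 0)"
    and psi0: "\<And>t. 0 \<le> t \<Longrightarrow> t \<le> 1/4 \<Longrightarrow> \<psi> t = 0"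
    and psi1: "\<And>t. 1/2 \<le> t \<Longrightarrow> \<psi> t = 1"
  shows "\<exists>c C. c > 0 \<and> C > 0 \<and>
    (\<forall>x p p'. norm p = 1 \<longrightarrow> norm p' \<le> 1 \<longrightarrow>
      (let T = sqrt (A x p) -
              (if norm p' \<le> 1/4 then 0
               else norm p' * \<psi> (norm p') * (grad (\<lambda>q. sqrt (A x q)) p' \<bullet> p))
       in c * (norm (p - p'))\<^sup>2 \<le> T \<and> T \<le> C * ((norm (p - p'))\<^sup>2 + (1 - norm p'))))"
proof -
  have psir: "\<And>t. 1/4 \<le> t \<Longrightarrow> 0 \<le> \<psi> t \<and> \<psi> t \<le> 1"
    by (rule psi_range[OF psi_smooth psi0 psi1])
  define F where "F = (\<lambda>z::(real^'d) \<times> (real^'d). A (fst z) (snd z))"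
  define U where "U = (UNIV :: (real^'d) set) \<times> (UNIV - {0 :: real^'d})"
  have dp: "\<And>x p. ((\<lambda>v. (x, v)) has_derivative (\<lambda>h. (0, h))) (at (p::real^'d))"
    by (auto intro!: derivative_eq_intros)
  have H1: "\<And>x p. (A x has_derivative (\<lambda>h. grad (A x) p \<bullet> h)) (at p)"
  proof -
    fix x p
    obtain D1 where D1: "\<And>z. (F has_derivative blinfun_apply (D1 z)) (at z)"
      using C1 unfolding C1_on_def F_def by blast
    have "((\<lambda>v. F (x, v)) has_derivative (\<lambda>h. D1 (x,p) (0,h))) (at p)"
      using has_derivative_compose[OF dp D1] by simp
    then have "(A x has_derivative (\<lambda>h. D1 (x,p) (0,h))) (at p)" unfolding F_def by simp
    then show "(A x has_derivative (\<lambda>h. grad (A x) p \<bullet> h)) (at p)" by (rule grad_works(1))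
  qed
  obtain D where D: "\<And>z. z \<in> U \<Longrightarrow> (F has_derivative blinfun_apply (D z)) (at z)"
    and CD: "C1_on U D" using C2 unfolding C2_on_def F_def U_def by blast
  obtain D2 where D2: "\<And>z. z \<in> U \<Longrightarrow> (D has_derivative blinfun_apply (D2 z)) (at z)"
    and cD2: "continuous_on U D2" using CD unfolding C1_on_def by blast
  have gD: "\<And>x p h. p \<noteq> 0 \<Longrightarrow> grad (A x) p \<bullet> h = D (x,p) (0,h)"
  proof -
    fix x and p h :: "real^'d" assume "p \<noteq> 0"
    then have "(x, p) \<in> U" unfolding U_def by simp
    then have "((\<lambda>v. F (x, v)) has_derivative (\<lambda>h. D (x,p) (0,h))) (at p)"
      using has_derivative_compose[OF dp D] by simp
    then have "(A x has_derivative (\<lambda>h. D (x,p) (0,h))) (at p)" unfolding F_def by simp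
    from grad_works(2)[OF this] show "grad (A x) p \<bullet> h = D (x,p) (0,h)" by metis
  qed
  define K where "K = cbox (0::real^'d) 1 \<times> {p::real^'d. 1/2 \<le> norm p \<and> norm p \<le> 1}"
  have KU: "K \<subseteq> U" unfolding K_def U_def by auto
  have cK: "compact K" unfolding K_def
  proof (intro compact_Times compact_cbox)
    have "closed {p::real^'d. 1/2 \<le> norm p \<and> norm p \<le> 1}"
      by (intro closed_Collect_conj closed_Collect_le continuous_intros)
    moreover have "bounded {p::real^'d. 1/2 \<le> norm p \<and> norm p \<le> 1}"
      by (rule bounded_subset[of "cball 0 1"]) auto
    ultimately show "compact {p::real^'d. 1/2 \<le> norm p \<and> norm p \<le> 1}"
      using compact_eq_bounded_closed by blast
  qed
  have "compact (D2 ` K)" using cK cD2 KU by (intro compact_continuous_image) (auto intro: continuous_on_subset)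
  then obtain M1 where M1: "\<And>z. z \<in> K \<Longrightarrow> norm (D2 z) \<le> M1"
    using compact_imp_bounded[of "D2 ` K"] unfolding bounded_iff by blast
  define M where "M = max M1 0"
  have M0: "M \<ge> 0" and MK: "\<And>z. z \<in> K \<Longrightarrow> norm (D2 z) \<le> M" using M1 unfolding M_def by force+
  have bu: "A x0 p - A x0 q - grad (A x0) q \<bullet> (p - q) \<le> M * (norm (p - q))\<^sup>2"
    if x0: "x0 \<in> cbox 0 1" and p: "norm p = 1" and q: "norm q = 1" and pq: "norm (p - q) \<le> 1"
    for x0 p q :: "real^'d"
  proof -
    define S where "S = closed_segment (x0, q) (x0, p)"
    have seg: "(x0, (1 - u) *\<^sub>R q + u *\<^sub>R p) \<in> S" if "0 \<le> u" "u \<le> 1" for u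
    proof -
      have "(x0, (1 - u) *\<^sub>R q + u *\<^sub>R p) = (1 - u) *\<^sub>R (x0, q) + u *\<^sub>R (x0, p)"
        by (simp add: algebra_simps)
      then show ?thesis unfolding S_def closed_segment_def using that by blast
    qed
    have SK: "S \<subseteq> K"
    proof
      fix z assume "z \<in> S"
      then obtain u where u: "0 \<le> u" "u \<le> 1" and z: "z = (1 - u) *\<^sub>R (x0, q) + u *\<^sub>R (x0, p)"
        unfolding S_def closed_segment_def by blast
      have "z = (x0, (1 - u) *\<^sub>R q + u *\<^sub>R p)" using z by (simp add: algebra_simps)
      then show "z \<in> K" unfolding K_def using seg_norm[OF p q pq u] x0 by simp
    qed
    have lip: "norm (D z - D (x0, q)) \<le> M * norm (z - (x0, q))" if "z \<in> S" for z
    proof (rule differentiable_bound[of S D "\<lambda>z. blinfun_apply (D2 z)" M])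
      show "convex S" unfolding S_def by simp
    next
      fix x assume xS: "x \<in> S"
      then have xU: "x \<in> U" using SK KU by blast
      show "(D has_derivative blinfun_apply (D2 x)) (at x within S)"
        by (rule has_derivative_at_withinI[OF D2[OF xU]])
    next
      fix x assume xS: "x \<in> S"
      have "norm (D2 x) \<le> M" using MK SK xS by blast
      moreover have "onorm (blinfun_apply (D2 x)) = norm (D2 x)" by (rule norm_blinfun.rep_eq[symmetric])
      ultimately show "onorm (blinfun_apply (D2 x)) \<le> M" by simp
    next
      show "z \<in> S" by fact
      show "(x0, q) \<in> S" unfolding S_def by simp
    qed
    define h where "h = p - q"
    define k where "k = (\<lambda>t. M * t\<^sup>2 * (norm h)\<^sup>2 - A x0 (q + t *\<^sub>R h) + t * (grad (A x0) q \<bullet> h))"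
    have "k 0 \<le> k 1"
    proof (rule DERIV_nonneg_imp_nondecreasing[of 0 1 k])
      fix t :: real assume t: "0 \<le> t" "t \<le> 1"
      define w where "w = q + t *\<^sub>R h"
      have w: "w = (1 - t) *\<^sub>R q + t *\<^sub>R p" unfolding w_def h_def by (simp add: algebra_simps)
      have wS: "(x0, w) \<in> S" using seg[OF t] w by simp
      have w0: "w \<noteq> 0" using seg_norm[OF p q pq t] w by auto
      have q0: "q \<noteq> 0" using q by auto
      have lf: "((\<lambda>t. A x0 (q + t *\<^sub>R h)) has_real_derivative (grad (A x0) (q + t *\<^sub>R h) \<bullet> h)) (at t)"
        by (rule line_deriv[OF H1])
      have d1: "((\<lambda>t. M * t\<^sup>2 * (norm h)\<^sup>2) has_real_derivative M * (2 * t) * (norm h)\<^sup>2) (at t)"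
        by (auto intro!: derivative_eq_intros)
      have d2: "((\<lambda>t. t * (grad (A x0) q \<bullet> h)) has_real_derivative grad (A x0) q \<bullet> h) (at t)"
        by (auto intro!: derivative_eq_intros)
      have dk: "(k has_real_derivative (M * (2 * t) * (norm h)\<^sup>2 - grad (A x0) w \<bullet> h + grad (A x0) q \<bullet> h)) (at t)"
        unfolding k_def w_def using DERIV_add[OF DERIV_diff[OF d1 lf] d2] by simp
      have "grad (A x0) w \<bullet> h - grad (A x0) q \<bullet> h = (D (x0, w) - D (x0, q)) (0, h)"
        using gD[OF w0] gD[OF q0] by (simp add: blinfun.diff_left)
      also have "\<dots> \<le> norm (D (x0, w) - D (x0, q)) * norm ((0::real^'d), h)"
      proof -
        have nb: "norm ((D (x0, w) - D (x0, q)) (0, h)) \<le> norm (D (x0, w) - D (x0, q)) * norm ((0::real^'d), h)"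
          by (rule norm_blinfun)
        have "(D (x0, w) - D (x0, q)) (0, h) \<le> norm ((D (x0, w) - D (x0, q)) (0, h))"
          unfolding real_norm_def by (rule abs_ge_self)
        then show ?thesis using nb by (rule order_trans)
      qed
      also have "\<dots> \<le> (M * norm ((x0, w) - (x0, q))) * norm h"
        using lip[OF wS] M0 by (intro mult_mono) (auto simp: norm_Pair)
      also have "norm ((x0, w) - (x0, q)) = t * norm h" unfolding w_def using t by (simp add: norm_Pair)
      finally have "grad (A x0) w \<bullet> h - grad (A x0) q \<bullet> h \<le> M * t * (norm h)\<^sup>2"
        by (simp add: power2_eq_square algebra_simps)
      moreover have "M * t * (norm h)\<^sup>2 \<le> M * (2 * t) * (norm h)\<^sup>2"
        using M0 t by (intro mult_right_mono mult_left_mono) auto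
      ultimately have "0 \<le> M * (2 * t) * (norm h)\<^sup>2 - grad (A x0) w \<bullet> h + grad (A x0) q \<bullet> h" by linarith
      then show "\<exists>y. (k has_real_derivative y) (at t) \<and> 0 \<le> y" using dk by blast
    qed simp
    then show ?thesis unfolding k_def h_def by (simp add: algebra_simps)
  qed
  have hf: "hfun2 (A x0) A0 A1 a1 C0 \<psi> M" if x0: "x0 \<in> cbox 0 1" for x0
  proof (intro hfun2.intro hfun.intro hfun2_axioms.intro)
    show "\<And>p. (A x0 has_derivative (\<lambda>h. grad (A x0) p \<bullet> h)) (at p)" by (rule H1)
    show "\<And>p t. t > 0 \<Longrightarrow> A x0 (t *\<^sub>R p) = t\<^sup>2 * A x0 p" by (rule hom)
    show "0 < A0" by (rule A0pos)
    show "\<And>p. A0 * (norm p)\<^sup>2 \<le> A x0 p \<and> A x0 p \<le> A1 * (norm p)\<^sup>2" by (rule bounds)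
    show "\<And>p. norm (grad (A x0) p) \<le> a1 * norm p" by (rule grad_bd)
    show "\<And>p q. (grad (A x0) p - grad (A x0) q) \<bullet> (p - q) \<ge> C0 * (norm (p - q))\<^sup>2" by (rule convex)
    show "C0 > 0" by (rule C0pos)
    show "M \<ge> 0" by (rule M0)
    show "\<And>p q. norm p = 1 \<Longrightarrow> norm q = 1 \<Longrightarrow> norm (p - q) \<le> 1 \<Longrightarrow>
       A x0 p - A x0 q - grad (A x0) q \<bullet> (p - q) \<le> M * (norm (p - q))\<^sup>2" using bu[OF x0] by blast
    show "\<And>t. 1/2 \<le> t \<Longrightarrow> \<psi> t = 1" by (rule psi1)
    show "\<And>t. 1/4 \<le> t \<Longrightarrow> 0 \<le> \<psi> t \<and> \<psi> t \<le> 1" by (rule psir)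
  qed
  define Gb where "Gb = a1 / (2 * sqrt A0)"
  define K' where "K' = M / (2 * sqrt A0) + sqrt A1 + Gb"
  define c where "c = min (sqrt A0 / 4) (C0 / (128 * sqrt A1))"
  define C where "C = 2 * K' + 2 * sqrt A1 + 2 * Gb + 1"
  have key: "c * (norm (p - p'))\<^sup>2 \<le> T \<and> T \<le> C * ((norm (p - p'))\<^sup>2 + (1 - norm p'))"
    if p: "norm p = 1" and p': "norm p' \<le> 1"
      and T: "T = sqrt (A x p) - (if norm p' \<le> 1/4 then 0
               else norm p' * \<psi> (norm p') * (grad (\<lambda>q. sqrt (A x q)) p' \<bullet> p))"
    for x p p' T
  proof -
    define x0 where "x0 = x - (\<chi> i. of_int \<lfloor>x $ i\<rfloor>)"
    have eqx: "A x0 = A x"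
    proof
      fix v
      have "A (x0 + (\<chi> i. of_int \<lfloor>x $ i\<rfloor>)) v = A x0 v" by (rule periodic)
      then show "A x0 v = A x v" unfolding x0_def by simp
    qed
    moreover have x0c: "x0 \<in> cbox 0 1" unfolding x0_def mem_box_cart
      by (auto simp: of_int_floor_le) (smt (verit) real_of_int_floor_add_one_gt)
    note R = hfun2.final_f[OF hf[OF x0c] p p', unfolded eqx]
    show ?thesis
      using R T unfolding Gb_def K'_def c_def C_def by simp
  qed
  have cpos: "c > 0" unfolding c_def using A0pos C0pos A01 by simp
  have Cpos: "C > 0"
  proof -
    have "a1 \<ge> 0"
    proof -
      obtain u :: "real^'d" where "norm u = 1" using vector_choose_size[of 1] by auto
      then show ?thesis using grad_bd[of 0 u] by (metis mult.right_neutral norm_ge_zero order_trans)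
    qed
    then have "Gb \<ge> 0" "M / (2 * sqrt A0) \<ge> 0" "sqrt A1 \<ge> 0" unfolding Gb_def using M0 A0pos A01 by auto
    moreover have "0 < 2 * (a + b + g) + 2 * b + 2 * g + 1"
      if "a \<ge> 0" "b \<ge> 0" "g \<ge> 0" for a b g :: real using that by simp
    ultimately show ?thesis unfolding C_def K'_def by blast
  qed
  show ?thesis
    by (rule exI[of _ c], rule exI[of _ C]) (use cpos Cpos key in \<open>auto simp: Let_def\<close>)
qed

end
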